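(* If $P_{\text{FA,L}} < 0.5$ and $P_{\text{MD,L}} < 0.5$, then the false alarm probability $P_{\text{FA}}(\gamma_t,p_t,\mathbf{t},P_{\text{FA,M}})$ and the missed detection probability $P_{\text{MD}}(\gamma_t,p_t,\mathbf{t},P_{\text{MD,M}})$ of the fusion center under the two stage approach are maximized when the malicious robots choose $P_{\text{FA,M}} = P_{\text{MD,M}} = 1$, for any vector $\mathbf{t}\in\{0,1\}^N$.
   Context: A network of $N$ robots $\mathcal{N}=\{1,\dots,N\}$ senses a binary event $\Xi\in\{0,1\}$ (hypotheses $\mathcal{H}_0$: $\Xi=0$, $\mathcal{H}_1$: $\Xi=1$); each robot $i$ sends a bit $Y_i\in\{0,1\}$ to a fusion center (FC). The true trust vector $\mathbf{t}\in\{0,1\}^N$ has $t_i=1$ if robot $i$ is legitimate and $t_i=0$ if malicious. Legitimate robots report their noisy measurement with false alarm probability $P_{\text{FA,L}}=\Pr(Y_i=1|\Xi=0,t_i=1)$ and missed detection probability $P_{\text{MD,L}}=\Pr(Y_i=0|\Xi=1,t_i=1)$; malicious robots have effective (after possibly flipping their bit) probabilities $P_{\text{FA,M}}=\Pr(Y_i=1|\Xi=0,t_i=0)$ and $P_{\text{MD,M}}=\Pr(Y_i=0|\Xi=1,t_i=0)$. Measurements are independent given the hypothesis and trust vector. Each robot also carries a stochastic trust value $\alpha_i$ with pmf $p_\alpha(a|t)$, independent of measurements and hypothesis. In the two stage approach the FC first sets $\hat t_i=1$ if $p_\alpha(a_i|t_i=1)/p_\alpha(a_i|t_i=0)>\gamma_t$,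 $\hat t_i=0$ if it is $<\gamma_t$, and in case of equality $\hat t_i=1$ with probability $p_t$. It then decides $\mathcal{H}_1$ iff $S_N=\sum_{i=1}^N \hat t_i[w_{1,\text{L}}y_i - w_{0,\text{L}}(1-y_i)]\ge \gamma_{\text{TS}}$, where $w_{1,\text{L}}=\log\frac{1-P_{\text{MD,L}}}{P_{\text{FA,L}}}$, $w_{0,\text{L}}=\log\frac{1-P_{\text{FA,L}}}{P_{\text{MD,L}}}$ and $\exp(\gamma_{\text{TS}})=\Pr(\Xi=0)/\Pr(\Xi=1)$. Thus $P_{\text{FA}}(\gamma_t,p_t,\mathbf{t},P_{\text{FA,M}})=\Pr(S_N\ge\gamma_{\text{TS}}\mid\mathcal{H}_0,\gamma_t,p_t,\mathbf{t},P_{\text{FA,M}})$ and $P_{\text{MD}}(\gamma_t,p_t,\mathbf{t},P_{\text{MD,M}})=\Pr(S_N<\gamma_{\text{TS}}\mid\mathcal{H}_1,\gamma_t,p_t,\mathbf{t},P_{\text{MD,M}})$. *)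

theory Defs
  imports "HOL-Probability.Probability"
begin

text \<open>Robots are indexed by 1..N. Trust value t i = True means legitimate (t_i = 1),
  False means malicious (t_i = 0). The trust values alpha_i have pmf palpha (t_i).\<close>

definition w1L :: "real \<Rightarrow> real \<Rightarrow> real" where
  "w1L PFAL PMDL = ln ((1 - PMDL) / PFAL)"

definition w0L :: "real \<Rightarrow> real \<Rightarrow> real" where
  "w0L PFAL PMDL = ln ((1 - PFAL) / PMDL)"

text \<open>Threshold of the fusion rule: exp gamma_TS = Pr(Xi=0)/Pr(Xi=1), with prior pi0 = Pr(Xi=0).\<close>
definition gammaTS :: "real \<Rightarrow> real" where
  "gammaTS pi0 = ln (pi0 / (1 - pi0))"

text \<open>Distribution of the estimated trust hat t_i of a robot with true trust ti:
  likelihood-ratio test p(a|1)/p(a|0) vs gamma_t (written in cross-multiplied form, so that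
  a zero denominator means an infinite ratio), randomised with probability pt on ties.\<close>
definition that_pmf :: "(bool \<Rightarrow> 'a pmf) \<Rightarrow> real \<Rightarrow> real \<Rightarrow> bool \<Rightarrow> bool pmf" where
  "that_pmf palpha gt pt ti =
     palpha ti \<bind> (\<lambda>a.
       if pmf (palpha True) a > gt * pmf (palpha False) a then return_pmf True
       else if pmf (palpha True) a < gt * pmf (palpha False) a then return_pmf False
       else bernoulli_pmf pt)"

definition y0_pmf :: "real \<Rightarrow> real \<Rightarrow> bool \<Rightarrow> bool pmf" where
  "y0_pmf PFAL PFAM ti = bernoulli_pmf (if ti then PFAL else PFAM)"

definition y1_pmf :: "real \<Rightarrow> real \<Rightarrow> bool \<Rightarrow> bool pmf" where
  "y1_pmf PMDL PMDM ti = bernoulli_pmf (1 - (if ti then PMDL else PMDM))"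

text \<open>Fusion statistic S_N on an outcome omega i = (hat t_i, y_i).\<close>
definition S_N :: "nat \<Rightarrow> real \<Rightarrow> real \<Rightarrow> (nat \<Rightarrow> bool \<times> bool) \<Rightarrow> real" where
  "S_N N PFAL PMDL \<omega> =
     (\<Sum>i\<in>{1..N}. of_bool (fst (\<omega> i)) *
        (w1L PFAL PMDL * of_bool (snd (\<omega> i)) - w0L PFAL PMDL * (1 - of_bool (snd (\<omega> i)))))"

definition P_FA :: "nat \<Rightarrow> (bool \<Rightarrow> 'a pmf) \<Rightarrow> real \<Rightarrow> real \<Rightarrow> real \<Rightarrow> real \<Rightarrow> real
                    \<Rightarrow> (nat \<Rightarrow> bool) \<Rightarrow> real \<Rightarrow> real" where
  "P_FA N palpha pi0 PFAL PMDL gt pt t PFAM =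
     measure_pmf.prob
       (Pi_pmf {1..N} (False, False)
          (\<lambda>i. pair_pmf (that_pmf palpha gt pt (t i)) (y0_pmf PFAL PFAM (t i))))
       {\<omega>. S_N N PFAL PMDL \<omega> \<ge> gammaTS pi0}"

definition P_MD :: "nat \<Rightarrow> (bool \<Rightarrow> 'a pmf) \<Rightarrow> real \<Rightarrow> real \<Rightarrow> real \<Rightarrow> real \<Rightarrow> real
                    \<Rightarrow> (nat \<Rightarrow> bool) \<Rightarrow> real \<Rightarrow> real" where
  "P_MD N palpha pi0 PFAL PMDL gt pt t PMDM =
     measure_pmf.prob
       (Pi_pmf {1..N} (False, False)
          (\<lambda>i. pair_pmf (that_pmf palpha gt pt (t i)) (y1_pmf PMDL PMDM (t i))))
       {\<omega>. S_N N PFAL PMDL \<omega> < gammaTS pi0}"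

end

theory Submission
  imports Defs
begin

lemma Pi_pmf_map_dep:
  assumes "finite A"
  shows "Pi_pmf A d (\<lambda>x. map_pmf (f x) (g x)) =
         map_pmf (\<lambda>h x. if x \<in> A then f x (h x) else d) (Pi_pmf A d g)"
proof -
  have "Pi_pmf A d (\<lambda>x. map_pmf (f x) (g x)) =
          Pi_pmf A d (\<lambda>x. g x \<bind> (\<lambda>y. return_pmf (f x y)))"
    by (simp add: map_pmf_def)
  also have "\<dots> = Pi_pmf A d g \<bind> (\<lambda>h. Pi_pmf A d (\<lambda>x. return_pmf (f x (h x))))"
    by (rule Pi_pmf_bind[OF assms])
  also have "\<dots> = Pi_pmf A d g \<bind> (\<lambda>h. return_pmf (\<lambda>x. if x \<in> A then f x (h x) else d))"
    using assms by simp
  finally show ?thesis by (simp add: map_pmf_def)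
qed

lemma bern1: "bernoulli_pmf 1 = return_pmf True"
  by (rule pmf_eqI) (simp add: pmf_bernoulli_True pmf_bernoulli_False split: split_indicator)

lemma bern0: "bernoulli_pmf 0 = return_pmf False"
  by (rule pmf_eqI) (auto simp: pmf_bernoulli_True pmf_bernoulli_False split: split_indicator)

lemma pair_const:
  "pair_pmf T (return_pmf c) = map_pmf (\<lambda>p. (fst p, c)) (pair_pmf T B)"
  by (rule pmf_eqI) (simp add: pair_pmf_def map_pmf_def bind_assoc_pmf bind_return_pmf
      bind_return_pmf' split_beta)

lemma w_nonneg:
  assumes "0 \<le> PFAL" "PFAL < 1/2" "0 \<le> PMDL" "PMDL < 1/2"
  shows "0 \<le> w1L PFAL PMDL" "0 \<le> w0L PFAL PMDL"
proof -
  show "0 \<le> w1L PFAL PMDL"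
  proof (cases "PFAL = 0")
    case True then show ?thesis by (simp add: w1L_def)
  next
    case False
    then have "1 \<le> (1 - PMDL) / PFAL" using assms by (simp add: field_simps)
    then show ?thesis by (simp add: w1L_def)
  qed
  show "0 \<le> w0L PFAL PMDL"
  proof (cases "PMDL = 0")
    case True then show ?thesis by (simp add: w0L_def)
  next
    case False
    then have "1 \<le> (1 - PFAL) / PMDL" using assms by (simp add: field_simps)
    then show ?thesis by (simp add: w0L_def)
  qed
qed

theorem lemma1:
  fixes N :: nat and palpha :: "bool \<Rightarrow> 'a pmf" and t :: "nat \<Rightarrow> bool"
    and pi0 PFAL PMDL gt pt :: real
  assumes "0 < pi0" "pi0 < 1"
    and "0 \<le> PFAL" "PFAL < 1/2" and "0 \<le> PMDL" "PMDL < 1/2"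
    and "0 \<le> pt" "pt \<le> 1"
  shows "(\<forall>PFAM\<in>{0..1}. P_FA N palpha pi0 PFAL PMDL gt pt t PFAM
                          \<le> P_FA N palpha pi0 PFAL PMDL gt pt t 1)
       \<and> (\<forall>PMDM\<in>{0..1}. P_MD N palpha pi0 PFAL PMDL gt pt t PMDM
                          \<le> P_MD N palpha pi0 PFAL PMDL gt pt t 1)"
proof -
  have w1: "0 \<le> w1L PFAL PMDL" and w0: "0 \<le> w0L PFAL PMDL"
    using w_nonneg assms by auto
  let ?T = "\<lambda>i. that_pmf palpha gt pt (t i)"
  let ?d = "(False, False)"
  define F where "F c = (\<lambda>\<omega>::nat \<Rightarrow> bool \<times> bool. \<lambda>i. if i \<in> {1..N} then
      (if t i then \<omega> i else (fst (\<omega> i), c)) else ?d)" for c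
  have S_up: "S_N N PFAL PMDL \<omega> \<le> S_N N PFAL PMDL (F True \<omega>)" for \<omega>
    unfolding S_N_def F_def
    by (intro sum_mono) (use w1 w0 in \<open>auto intro: mult_left_mono\<close>)
  have S_down: "S_N N PFAL PMDL (F False \<omega>) \<le> S_N N PFAL PMDL \<omega>" for \<omega>
    unfolding S_N_def F_def
    by (intro sum_mono) (use w1 w0 in \<open>auto intro: mult_left_mono\<close>)
  have part1: "P_FA N palpha pi0 PFAL PMDL gt pt t PFAM
                          \<le> P_FA N palpha pi0 PFAL PMDL gt pt t 1" for PFAM
  proof -
    let ?M = "Pi_pmf {1..N} ?d (\<lambda>i. pair_pmf (?T i) (y0_pmf PFAL PFAM (t i)))"
    have eq: "Pi_pmf {1..N} ?d (\<lambda>i. pair_pmf (?T i) (y0_pmf PFAL 1 (t i))) = map_pmf (F True) ?M"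
    proof -
      have "Pi_pmf {1..N} ?d (\<lambda>i. pair_pmf (?T i) (y0_pmf PFAL 1 (t i))) =
        Pi_pmf {1..N} ?d (\<lambda>i. map_pmf (\<lambda>p. if t i then p else (fst p, True))
             (pair_pmf (?T i) (y0_pmf PFAL PFAM (t i))))"
        by (intro Pi_pmf_cong refl)
           (auto simp: y0_pmf_def pmf.map_id0 bern1 bern0 pair_const[where B="bernoulli_pmf PFAM"] split_beta
                 simp del: pmf.map_comp)
      also have "\<dots> = map_pmf (F True) ?M"
        by (subst Pi_pmf_map_dep) (auto simp: F_def)
      finally show ?thesis .
    qed
    show ?thesis unfolding P_FA_def eq measure_map_pmf
      by (rule measure_pmf.finite_measure_mono) (use S_up in \<open>auto intro: order_trans\<close>)
  qed
  have part2: "P_MD N palpha pi0 PFAL PMDL gt pt t PMDM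
                          \<le> P_MD N palpha pi0 PFAL PMDL gt pt t 1" for PMDM
  proof -
    let ?M = "Pi_pmf {1..N} ?d (\<lambda>i. pair_pmf (?T i) (y1_pmf PMDL PMDM (t i)))"
    have eq: "Pi_pmf {1..N} ?d (\<lambda>i. pair_pmf (?T i) (y1_pmf PMDL 1 (t i))) = map_pmf (F False) ?M"
    proof -
      have "Pi_pmf {1..N} ?d (\<lambda>i. pair_pmf (?T i) (y1_pmf PMDL 1 (t i))) =
        Pi_pmf {1..N} ?d (\<lambda>i. map_pmf (\<lambda>p. if t i then p else (fst p, False))
             (pair_pmf (?T i) (y1_pmf PMDL PMDM (t i))))"
        by (intro Pi_pmf_cong refl)
           (auto simp: y1_pmf_def pmf.map_id0 bern1 bern0 pair_const[where B="bernoulli_pmf (1 - PMDM)"] split_beta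
                 simp del: pmf.map_comp)
      also have "\<dots> = map_pmf (F False) ?M"
        by (subst Pi_pmf_map_dep) (auto simp: F_def)
      finally show ?thesis .
    qed
    show ?thesis unfolding P_MD_def eq measure_map_pmf
      by (rule measure_pmf.finite_measure_mono) (use S_down in \<open>auto intro: le_less_trans\<close>)
  qed
  show ?thesis using part1 part2 by blast
qed

end
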